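(* Let $p>1$ and $q>1$ be real numbers with $\frac1p+\frac1q=1$. For nonnegative random variables $X,Y$ defined on a common probability space with $\|X\|_p+\|Y\|_p+\|Y\|_q<\infty$, and for $\vartheta\in[0,1]$, define $$\mathcal{E}_{p,\vartheta}(X):=\big(\|X\|_p^p-\vartheta^p\|X\|_1^p\big)^{1/p},\qquad \mathcal{C}_{p,\vartheta}(X,Y):=\mathbb{E}X^{p-1}Y-\vartheta^p(\mathbb{E}X)^{p-1}\,\mathbb{E}Y.$$ (a) If $p\le 2$ (so $1<p\le2$), then for all $\vartheta\in[0,1]$ and all such $X,Y$, $$\mathcal{E}_{p,\vartheta}(X+Y)\le\mathcal{E}_{p,\vartheta}(X)+\mathcal{E}_{p,\vartheta}(Y)$$ and $$\mathcal{C}_{p,\vartheta}(X,Y)\le\mathcal{E}_{p,\vartheta}(X)^{p-1}\,\mathcal{E}_{p,\vartheta}(Y).$$ (b) For any real $p>2$ and any $\vartheta\in(0,1]$, neither of these two inequalities holds in general: there exist such nonnegative $X,Y$ for which the first inequality fails, and there exist such nonnegative $X,Y$ for which the second inequality fails.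
   Context: $\|X\|_r:=(\mathbb{E}|X|^r)^{1/r}$. The quantity $\mathcal{E}_{p,\vartheta}(X)$ is well defined (the expression under the $p$th root is nonnegative) since $\|X\|_1\le\|X\|_p$. For $\vartheta=0$ the two inequalities reduce to the Minkowski and Hölder inequalities, and for $\vartheta=1$, $\mathcal{E}_{p,1}(X)=(\|X\|_p^p-\|X\|_1^p)^{1/p}$ is the "$p$-excess" of $X$. *)

theory Defs
  imports "HOL-Probability.Probability"
begin

definition Lnorm :: "'a measure \<Rightarrow> real \<Rightarrow> ('a \<Rightarrow> real) \<Rightarrow> real" where
  "Lnorm M r X = (\<integral>x. \<bar>X x\<bar> powr r \<partial>M) powr (1 / r)"

definition Lnorm_finite :: "'a measure \<Rightarrow> real \<Rightarrow> ('a \<Rightarrow> real) \<Rightarrow> bool" where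
  "Lnorm_finite M r X \<longleftrightarrow> X \<in> borel_measurable M \<and>
     (\<integral>\<^sup>+ x. ennreal (\<bar>X x\<bar> powr r) \<partial>M) < \<infinity>"

definition Exc :: "'a measure \<Rightarrow> real \<Rightarrow> real \<Rightarrow> ('a \<Rightarrow> real) \<Rightarrow> real" where
  "Exc M p \<theta> X = (Lnorm M p X powr p - \<theta> powr p * Lnorm M 1 X powr p) powr (1 / p)"

definition Cov :: "'a measure \<Rightarrow> real \<Rightarrow> real \<Rightarrow> ('a \<Rightarrow> real) \<Rightarrow> ('a \<Rightarrow> real) \<Rightarrow> real" where
  "Cov M p \<theta> X Y = (\<integral>x. X x powr (p - 1) * Y x \<partial>M)
      - \<theta> powr p * (\<integral>x. X x \<partial>M) powr (p - 1) * (\<integral>x. Y x \<partial>M)"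

definition admissible :: "'a measure \<Rightarrow> real \<Rightarrow> real \<Rightarrow> ('a \<Rightarrow> real) \<Rightarrow> ('a \<Rightarrow> real) \<Rightarrow> bool" where
  "admissible M p q X Y \<longleftrightarrow> prob_space M \<and>
     (\<forall>x\<in>space M. X x \<ge> 0 \<and> Y x \<ge> 0) \<and>
     Lnorm_finite M p X \<and> Lnorm_finite M p Y \<and> Lnorm_finite M q Y"

end

theory Submission
  imports Defs
begin

lemma young_D:
  fixes p x y :: real
  assumes p: "p > 1" and x: "x \<ge> 0" and y: "y \<ge> 0"
  shows "p * (x powr (p-1) * y) \<le> y powr p + (p-1) * x powr p"
proof -
  define q where "q = p / (p-1)"
  have q1: "q > 1" using p by (simp add: q_def field_simps)
  have pq: "1/p + 1/q = 1" using p by (simp add: q_def field_simps)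
  have "y * x powr (p-1) \<le> y powr p / p + (x powr (p-1)) powr q / q"
    by (rule Youngs_inequality[OF p q1 pq y]) (simp add: x)
  also have "(x powr (p-1)) powr q = x powr p"
    using p by (simp add: powr_powr q_def)
  finally have "y * x powr (p-1) \<le> y powr p / p + x powr p / q" .
  hence "p * (y * x powr (p-1)) \<le> p * (y powr p / p + x powr p / q)"
    using p by (intro mult_left_mono) auto
  also have "\<dots> = y powr p + (p-1) * x powr p"
    using p by (simp add: q_def field_simps)
  finally show ?thesis by (simp add: mult_ac)
qed

lemma bernoulli_powr:
  fixes r z :: real
  assumes r: "r \<ge> 1" and z: "z \<ge> -1"
  shows "1 + r * z \<le> (1 + z) powr r"
proof (cases "r = 1")
  case True thus ?thesis using z by simp
next
  case False
  hence r1: "r > 1" using r by simp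
  have "r * (1 powr (r-1) * (1+z)) \<le> (1+z) powr r + (r-1) * 1 powr r"
    by (rule young_D[OF r1]) (use z in auto)
  thus ?thesis by (simp add: algebra_simps)
qed

lemma bernoulli2:
  fixes p e :: real
  assumes p: "p \<ge> 2" and e: "e \<ge> 0"
  shows "1 + p * e + p * (p-1) / 2 * e^2 \<le> (1 + e) powr p"
proof -
  define f where "f t = (1 + t) powr p - 1 - p * t - p * (p-1)/2 * t^2" for t :: real
  have "f 0 \<le> f e"
  proof (rule DERIV_nonneg_imp_increasing_open[OF e])
    fix t :: real assume t: "0 < t" "t < e"
    have "DERIV f t :> p * (1+t) powr (p-1) - p - p*(p-1)*t"
      unfolding f_def using t
      by (auto intro!: derivative_eq_intros simp: power2_eq_square field_simps)
    moreover have "p * (1+t) powr (p-1) - p - p*(p-1)*t \<ge> 0"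
    proof -
      have "1 + (p-1) * t \<le> (1+t) powr (p-1)"
        by (rule bernoulli_powr) (use p t in auto)
      hence "p * (1 + (p-1) * t) \<le> p * (1+t) powr (p-1)"
        using p by (intro mult_left_mono) auto
      thus ?thesis by (simp add: algebra_simps)
    qed
    ultimately show "\<exists>y. DERIV f t :> y \<and> y \<ge> 0" by blast
  next
    show "continuous_on {0..e} f" unfolding f_def
      by (intro continuous_intros) auto
  qed
  thus ?thesis by (simp add: f_def)
qed

lemma powr_times_self:
  fixes x a :: real
  assumes "0 \<le> x"
  shows "x powr a * x = x powr (a + 1)"
proof (cases "x = 0")
  case False
  hence "x powr a * x powr 1 = x powr (a + 1)" using assms by (simp add: powr_add)
  thus ?thesis using assms False by simp
qed simp

lemma amgm_hess:
  fixes p X Y :: real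
  assumes p1: "1 < p" and p2: "p \<le> 2" and X: "X > 0" and Y: "Y > 0"
  shows "(X powr (p-2))^2 \<le> Y powr (p-2) * ((p-1) * X powr (p-2) - (p-2) * (X powr (p-3) * Y))"
proof -
  define A where "A = Y powr (p-2) * X powr (p-2)"
  define B where "B = Y powr (p-1) * X powr (p-3)"
  have A0: "A > 0" "B > 0" using X Y by (auto simp: A_def B_def)
  have "A powr (p-1) * B powr (2-p) \<le> (p-1) * A + (2-p) * B"
    by (rule Youngs_inequality_0) (use p1 p2 A0 in auto)
  also have "A powr (p-1) * B powr (2-p) = X powr (2*p-4)"
  proof -
    have "A powr (p-1) * B powr (2-p) = (Y powr ((p-2)*(p-1)) * Y powr ((p-1)*(2-p))) * (X powr ((p-2)*(p-1)) * X powr ((p-3)*(2-p)))"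
      using X Y by (simp add: A_def B_def powr_mult powr_powr mult_ac)
    also have "\<dots> = Y powr ((p-2)*(p-1) + (p-1)*(2-p)) * X powr ((p-2)*(p-1) + (p-3)*(2-p))"
      by (simp add: powr_add)
    also have "(p-2)*(p-1) + (p-1)*(2-p) = 0" by (simp add: algebra_simps)
    also have "(p-2)*(p-1) + (p-3)*(2-p) = 2*p-4" by (simp add: algebra_simps)
    finally show ?thesis using Y by simp
  qed
  also have "X powr (2*p-4) = (X powr (p-2))^2"
    using X by (simp add: power2_eq_square powr_add[symmetric])
  also have "(p-1) * A + (2-p) * B = Y powr (p-2) * ((p-1) * X powr (p-2) - (p-2) * (X powr (p-3) * Y))"
  proof -
    have "Y powr (p-1) = Y powr (p-2) * Y" using Y powr_times_self[of Y "p-2"] by simp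
    thus ?thesis by (simp add: A_def B_def algebra_simps)
  qed
  finally show ?thesis .
qed

lemma quad_nonneg:
  fixes A B C u v :: real
  assumes "A > 0" "B^2 \<le> A * C"
  shows "0 \<le> A * u^2 - 2 * B * u * v + C * v^2"
proof -
  have "A * (A * u^2 - 2 * B * u * v + C * v^2) = (A * u - B * v)^2 + (A*C - B^2) * v^2"
    by (simp add: power2_eq_square algebra_simps)
  also have "\<dots> \<ge> 0" using assms by (intro add_nonneg_nonneg mult_nonneg_nonneg) auto
  finally show ?thesis using assms(1) by (simp add: zero_le_mult_iff)
qed

lemma hess_nonneg:
  fixes p X Y u v :: real
  assumes p1: "1 < p" and p2: "p \<le> 2" and X: "X > 0" and Y: "Y > 0"
  shows "0 \<le> p*(p-1)*(u^2 * Y powr (p-2) - 2 * u * v * X powr (p-2)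
           + v^2*((p-1)*X powr (p-2) - (p-2)*(X powr (p-3) * Y)))"
proof -
  have "0 \<le> Y powr (p-2) * u^2 - 2 * X powr (p-2) * u * v + ((p-1)*X powr (p-2) - (p-2)*(X powr (p-3) * Y)) * v^2"
    by (rule quad_nonneg) (use amgm_hess[OF p1 p2 X Y] Y in auto)
  thus ?thesis using p1 by (intro mult_nonneg_nonneg) (auto simp: algebra_simps)
qed

definition Dfun :: "real \<Rightarrow> real \<Rightarrow> real \<Rightarrow> real" where
  "Dfun p y x = y powr p + (p-1) * x powr p - p * (x powr (p-1) * y)"

lemma tangent_D:
  fixes p a b x y :: real
  assumes p1: "1 < p" and p2: "p \<le> 2" and a: "a > 0" and b: "b > 0" and x: "x \<ge> 0" and y: "y \<ge> 0"
  shows "Dfun p b a + p*(b powr (p-1) - a powr (p-1))*(y-b)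
           + p*(p-1)*(a powr (p-1) - a powr (p-2) * b)*(x-a) \<le> Dfun p y x"
proof -
  define yt where "yt t = b + t*(y-b)" for t :: real
  define xt where "xt t = a + t*(x-a)" for t :: real
  define \<phi> where "\<phi> t = yt t powr p + (p-1) * xt t powr p - p * (xt t powr (p-1) * yt t)" for t
  define \<phi>1 where "\<phi>1 t = (y-b)*(p*yt t powr (p-1) - p*xt t powr (p-1))
      + (x-a)*(p*(p-1)*xt t powr (p-1) - p*(p-1)*(xt t powr (p-2) * yt t))" for t
  define \<phi>2 where "\<phi>2 t = p*(p-1)*((y-b)^2 * yt t powr (p-2) - 2 * (y-b) * (x-a) * xt t powr (p-2)
      + (x-a)^2*((p-1)*xt t powr (p-2) - (p-2)*(xt t powr (p-3) * yt t)))" for t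
  have e1: "p - 1 - 1 = p - 2" "p - 2 - 1 = p - 3" by simp_all
  have pos: "yt t > 0" "xt t > 0" if "0 \<le> t" "t < 1" for t
  proof -
    have "yt t = (1-t)*b + t*y" by (simp add: yt_def algebra_simps)
    moreover have "(1-t)*b > 0" using that b by simp
    moreover have "t*y \<ge> 0" using that y by simp
    ultimately show "yt t > 0" by linarith
    have "xt t = (1-t)*a + t*x" by (simp add: xt_def algebra_simps)
    moreover have "(1-t)*a > 0" using that a by simp
    moreover have "t*x \<ge> 0" using that x by simp
    ultimately show "xt t > 0" by linarith
  qed
  have dy: "(yt has_real_derivative (y-b)) (at t)" for t
    unfolding yt_def by (auto intro!: derivative_eq_intros)
  have dx: "(xt has_real_derivative (x-a)) (at t)" for t
    unfolding xt_def by (auto intro!: derivative_eq_intros)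
  have d1: "DERIV \<phi> t :> \<phi>1 t" if "yt t > 0" "xt t > 0" for t
    unfolding \<phi>_def \<phi>1_def
    apply (rule derivative_eq_intros dy dx that refl)+
    apply (simp add: e1 algebra_simps)
    done
  have d2: "DERIV \<phi>1 t :> \<phi>2 t" if "yt t > 0" "xt t > 0" for t
    unfolding \<phi>1_def \<phi>2_def
    apply (rule derivative_eq_intros dy dx that refl)+
    apply (simp add: e1 algebra_simps power2_eq_square)
    done
  have h2: "\<phi>2 t \<ge> 0" if "yt t > 0" "xt t > 0" for t
    unfolding \<phi>2_def using hess_nonneg[OF p1 p2 that(2) that(1), of "y-b" "x-a"] by simp
  have cont: "continuous_on {0..1} \<phi>"
  proof -
    have "continuous_on {0..1} yt" "continuous_on {0..1} xt"
      unfolding yt_def xt_def by (intro continuous_intros)+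
    moreover have "\<forall>t\<in>{0..1}. yt t \<ge> 0" "\<forall>t\<in>{0..1}. xt t \<ge> 0"
    proof safe
      fix t :: real assume t: "t \<in> {0..1}"
      have "yt t = (1-t)*b + t*y" by (simp add: yt_def algebra_simps)
      thus "yt t \<ge> 0" using t b y by simp
      have "xt t = (1-t)*a + t*x" by (simp add: xt_def algebra_simps)
      thus "xt t \<ge> 0" using t a x by simp
    qed
    ultimately show ?thesis unfolding \<phi>_def using p1
      by (intro continuous_intros continuous_on_powr') auto
  qed
  have mono1: "\<phi>1 0 \<le> \<phi>1 t" if "0 \<le> t" "t < 1" for t
  proof (rule DERIV_nonneg_imp_increasing_open[OF that(1)])
    fix s assume "0 < s" "s < t"
    thus "\<exists>y. DERIV \<phi>1 s :> y \<and> y \<ge> 0" using d2 h2 pos that by (meson less_trans less_imp_le)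
  next
    show "continuous_on {0..t} \<phi>1"
    proof (rule DERIV_continuous_on[of _ _ \<phi>2])
      fix s assume "s \<in> {0..t}"
      hence "DERIV \<phi>1 s :> \<phi>2 s" using d2 pos that by auto
      thus "(\<phi>1 has_field_derivative \<phi>2 s) (at s within {0..t})" by (rule has_field_derivative_at_within)
    qed
  qed
  define \<psi> where "\<psi> t = \<phi> t - t * \<phi>1 0" for t
  have "\<psi> 0 \<le> \<psi> 1"
  proof (rule DERIV_nonneg_imp_increasing_open[of 0 1 \<psi>])
    fix s :: real assume s: "0 < s" "s < 1"
    have "DERIV \<psi> s :> \<phi>1 s - \<phi>1 0"
      unfolding \<psi>_def using d1[of s] pos[of s] s
      by (auto intro!: derivative_eq_intros)
    thus "\<exists>y. DERIV \<psi> s :> y \<and> y \<ge> 0" using mono1[of s] s by auto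
  next
    show "continuous_on {0..1} \<psi>" unfolding \<psi>_def
      by (intro continuous_intros cont)
  qed simp
  moreover have "\<psi> 1 = Dfun p y x - \<phi>1 0" by (simp add: \<psi>_def \<phi>_def yt_def xt_def Dfun_def)
  moreover have "\<psi> 0 = Dfun p b a" by (simp add: \<psi>_def \<phi>_def yt_def xt_def Dfun_def)
  moreover have "\<phi>1 0 = p*(b powr (p-1) - a powr (p-1))*(y-b)
           + p*(p-1)*(a powr (p-1) - a powr (p-2) * b)*(x-a)"
    by (simp add: \<phi>1_def yt_def xt_def algebra_simps)
  ultimately show ?thesis unfolding \<psi>_def by simp
qed

lemma int_of_powr:
  fixes M :: "'a measure" and X :: "'a \<Rightarrow> real" and p :: real
  assumes P: "prob_space M" and p: "p \<ge> 1" and Xm: "X \<in> borel_measurable M"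
    and nn: "\<And>\<omega>. \<omega> \<in> space M \<Longrightarrow> X \<omega> \<ge> 0"
    and iX: "integrable M (\<lambda>\<omega>. X \<omega> powr p)"
  shows "integrable M X"
proof -
  interpret prob_space M by (rule P)
  show ?thesis
  proof (rule Bochner_Integration.integrable_bound[where f="\<lambda>\<omega>. 1 + X \<omega> powr p"])
    show "integrable M (\<lambda>\<omega>. 1 + X \<omega> powr p)" using iX by auto
    show "X \<in> borel_measurable M" by (rule Xm)
    show "AE \<omega> in M. norm (X \<omega>) \<le> norm (1 + X \<omega> powr p)"
    proof (rule AE_I2)
      fix \<omega> assume w: "\<omega> \<in> space M"
      have "X \<omega> \<le> 1 + X \<omega> powr p"
      proof (cases "X \<omega> \<le> 1")
        case True thus ?thesis by (smt (verit) powr_ge_zero)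
      next
        case False
        hence "X \<omega> powr 1 \<le> X \<omega> powr p" using p by (intro powr_mono) auto
        thus ?thesis using False by simp
      qed
      thus "norm (X \<omega>) \<le> norm (1 + X \<omega> powr p)" using nn[OF w]
        by (smt (verit) powr_ge_zero real_norm_def)
    qed
  qed
qed

lemma int_mixed:
  fixes M :: "'a measure" and X Y :: "'a \<Rightarrow> real" and p :: real
  assumes p: "p > 1" and Xm: "X \<in> borel_measurable M" and Ym: "Y \<in> borel_measurable M"
    and nn: "\<And>\<omega>. \<omega> \<in> space M \<Longrightarrow> X \<omega> \<ge> 0 \<and> Y \<omega> \<ge> 0"
    and iX: "integrable M (\<lambda>\<omega>. X \<omega> powr p)" and iY: "integrable M (\<lambda>\<omega>. Y \<omega> powr p)"
  shows "integrable M (\<lambda>\<omega>. X \<omega> powr (p-1) * Y \<omega>)"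
proof (rule Bochner_Integration.integrable_bound[where f="\<lambda>\<omega>. Y \<omega> powr p + (p-1) * X \<omega> powr p"])
  show "integrable M (\<lambda>\<omega>. Y \<omega> powr p + (p-1) * X \<omega> powr p)" using iX iY by auto
  show "(\<lambda>\<omega>. X \<omega> powr (p-1) * Y \<omega>) \<in> borel_measurable M" using Xm Ym by measurable
  show "AE \<omega> in M. norm (X \<omega> powr (p-1) * Y \<omega>) \<le> norm (Y \<omega> powr p + (p-1) * X \<omega> powr p)"
  proof (rule AE_I2)
    fix \<omega> assume w: "\<omega> \<in> space M"
    have y: "p * (X \<omega> powr (p-1) * Y \<omega>) \<le> Y \<omega> powr p + (p-1) * X \<omega> powr p"
      using young_D[OF p] nn[OF w] by auto
    have z: "0 \<le> X \<omega> powr (p-1) * Y \<omega>" using nn[OF w] by auto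
    have "X \<omega> powr (p-1) * Y \<omega> \<le> p * (X \<omega> powr (p-1) * Y \<omega>)"
      using z p by (simp add: mult_le_cancel_right1)
    thus "norm (X \<omega> powr (p-1) * Y \<omega>) \<le> norm (Y \<omega> powr p + (p-1) * X \<omega> powr p)"
      using y z by simp
  qed
qed

lemma jensen_p:
  fixes M :: "'a measure" and X :: "'a \<Rightarrow> real" and p :: real
  assumes P: "prob_space M" and p: "p > 1" and Xm: "X \<in> borel_measurable M"
    and nn: "\<And>\<omega>. \<omega> \<in> space M \<Longrightarrow> X \<omega> \<ge> 0"
    and iX: "integrable M (\<lambda>\<omega>. X \<omega> powr p)"
  shows "(\<integral>\<omega>. X \<omega> \<partial>M) powr p \<le> (\<integral>\<omega>. X \<omega> powr p \<partial>M)"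
proof -
  interpret prob_space M by (rule P)
  have iX1: "integrable M X" by (rule int_of_powr[OF P _ Xm nn iX]) (use p in auto)
  define a where "a = (\<integral>\<omega>. X \<omega> \<partial>M)"
  have a0: "a \<ge> 0" unfolding a_def using nn by simp
  show ?thesis
  proof (cases "a = 0")
    case True thus ?thesis using nn by (simp add: a_def[symmetric])
  next
    case False
    have "(\<integral>\<omega>. p * (a powr (p-1) * X \<omega>) \<partial>M) \<le> (\<integral>\<omega>. X \<omega> powr p + (p-1) * a powr p \<partial>M)"
      using iX iX1 young_D[OF p a0] nn by (intro integral_mono) auto
    hence "p * (a powr (p-1) * a) \<le> (\<integral>\<omega>. X \<omega> powr p \<partial>M) + (p-1) * a powr p"
      using iX iX1 by (simp add: a_def prob_space)
    moreover have "a powr (p-1) * a = a powr p" using powr_times_self[OF a0, of "p-1"] by simp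
    ultimately have "p * a powr p \<le> (\<integral>\<omega>. X \<omega> powr p \<partial>M) + (p-1) * a powr p" by simp
    thus ?thesis by (simp add: a_def[symmetric] algebra_simps)
  qed
qed

lemma lemK:
  fixes M :: "'a measure" and X Y :: "'a \<Rightarrow> real" and p s :: real
  assumes P: "prob_space M" and p1: "1 < p" and p2: "p \<le> 2" and s0: "0 \<le> s" and s1: "s \<le> 1"
    and Xm: "X \<in> borel_measurable M" and Ym: "Y \<in> borel_measurable M"
    and nn: "\<And>\<omega>. \<omega> \<in> space M \<Longrightarrow> X \<omega> \<ge> 0 \<and> Y \<omega> \<ge> 0"
    and iX: "integrable M (\<lambda>\<omega>. X \<omega> powr p)" and iY: "integrable M (\<lambda>\<omega>. Y \<omega> powr p)"
  shows "p * ((\<integral>\<omega>. X \<omega> powr (p-1) * Y \<omega> \<partial>M) - s * (\<integral>\<omega>. X \<omega> \<partial>M) powr (p-1) * (\<integral>\<omega>. Y \<omega> \<partial>M))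
     \<le> ((\<integral>\<omega>. Y \<omega> powr p \<partial>M) - s * (\<integral>\<omega>. Y \<omega> \<partial>M) powr p)
        + (p-1) * ((\<integral>\<omega>. X \<omega> powr p \<partial>M) - s * (\<integral>\<omega>. X \<omega> \<partial>M) powr p)"
proof -
  interpret prob_space M by (rule P)
  have nnX: "\<And>\<omega>. \<omega> \<in> space M \<Longrightarrow> X \<omega> \<ge> 0" and nnY: "\<And>\<omega>. \<omega> \<in> space M \<Longrightarrow> Y \<omega> \<ge> 0"
    using nn by auto
  have iX1: "integrable M X" by (rule int_of_powr[OF P _ Xm nnX iX]) (use p1 in auto)
  have iY1: "integrable M Y" by (rule int_of_powr[OF P _ Ym nnY iY]) (use p1 in auto)
  have iXY: "integrable M (\<lambda>\<omega>. X \<omega> powr (p-1) * Y \<omega>)" by (rule int_mixed[OF p1 Xm Ym nn iX iY])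
  have JX: "(\<integral>\<omega>. X \<omega> \<partial>M) powr p \<le> (\<integral>\<omega>. X \<omega> powr p \<partial>M)" by (rule jensen_p[OF P p1 Xm nnX iX])
  have JY: "(\<integral>\<omega>. Y \<omega> \<partial>M) powr p \<le> (\<integral>\<omega>. Y \<omega> powr p \<partial>M)" by (rule jensen_p[OF P p1 Ym nnY iY])
  define a where "a = (\<integral>\<omega>. X \<omega> \<partial>M)"
  define b where "b = (\<integral>\<omega>. Y \<omega> \<partial>M)"
  define A where "A = (\<integral>\<omega>. X \<omega> powr p \<partial>M)"
  define B where "B = (\<integral>\<omega>. Y \<omega> powr p \<partial>M)"
  define C where "C = (\<integral>\<omega>. X \<omega> powr (p-1) * Y \<omega> \<partial>M)"
  have a0: "a \<ge> 0" unfolding a_def using nnX by simp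
  have b0: "b \<ge> 0" unfolding b_def using nnY by simp
  have JX': "s * a powr p \<le> A" using JX s0 s1 unfolding a_def[symmetric] A_def[symmetric]
    by (smt (verit) mult_left_le_one_le powr_ge_zero)
  have JY': "s * b powr p \<le> B" using JY s0 s1 unfolding b_def[symmetric] B_def[symmetric]
    by (smt (verit) mult_left_le_one_le powr_ge_zero)
  have "p * (C - s * a powr (p-1) * b) \<le> (B - s * b powr p) + (p-1) * (A - s * a powr p)"
  proof (cases "a = 0")
    case True
    have "AE \<omega> in M. X \<omega> = 0"
      using True iX1 nnX by (subst integral_nonneg_eq_0_iff_AE[symmetric]) (auto simp: a_def)
    hence "AE \<omega> in M. X \<omega> powr (p-1) * Y \<omega> = 0" by eventually_elim simp
    hence "C = 0" unfolding C_def by (rule integral_eq_zero_AE)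
    moreover have "AE \<omega> in M. X \<omega> powr p = 0" using \<open>AE \<omega> in M. X \<omega> = 0\<close> by eventually_elim simp
    hence "A = 0" unfolding A_def by (rule integral_eq_zero_AE)
    ultimately show ?thesis using True JY' p1 by simp
  next
    case a: False
    show ?thesis
    proof (cases "b = 0")
      case True
      have "AE \<omega> in M. Y \<omega> = 0"
        using True iY1 nnY by (subst integral_nonneg_eq_0_iff_AE[symmetric]) (auto simp: b_def)
      hence "AE \<omega> in M. X \<omega> powr (p-1) * Y \<omega> = 0" by eventually_elim simp
      hence "C = 0" unfolding C_def by (rule integral_eq_zero_AE)
      moreover have "AE \<omega> in M. Y \<omega> powr p = 0" using \<open>AE \<omega> in M. Y \<omega> = 0\<close> by eventually_elim simp
      hence "B = 0" unfolding B_def by (rule integral_eq_zero_AE)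
      ultimately show ?thesis using True JX' p1 by simp
    next
      case b: False
      have apos: "a > 0" using a a0 by simp
      have bpos: "b > 0" using b b0 by simp
      define g1 where "g1 = p*(b powr (p-1) - a powr (p-1))"
      define g2 where "g2 = p*(p-1)*(a powr (p-1) - a powr (p-2) * b)"
      have "(\<integral>\<omega>. Dfun p b a + g1 * (Y \<omega> - b) + g2 * (X \<omega> - a) \<partial>M)
          \<le> (\<integral>\<omega>. Y \<omega> powr p + (p-1) * X \<omega> powr p - p * (X \<omega> powr (p-1) * Y \<omega>) \<partial>M)"
      proof (rule integral_mono)
        show "integrable M (\<lambda>\<omega>. Dfun p b a + g1 * (Y \<omega> - b) + g2 * (X \<omega> - a))"
          using iX1 iY1 by auto
        show "integrable M (\<lambda>\<omega>. Y \<omega> powr p + (p-1) * X \<omega> powr p - p * (X \<omega> powr (p-1) * Y \<omega>))"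
          using iX iY iXY by auto
        fix \<omega> assume w: "\<omega> \<in> space M"
        show "Dfun p b a + g1 * (Y \<omega> - b) + g2 * (X \<omega> - a)
          \<le> Y \<omega> powr p + (p-1) * X \<omega> powr p - p * (X \<omega> powr (p-1) * Y \<omega>)"
          using tangent_D[OF p1 p2 apos bpos nnX[OF w] nnY[OF w]] unfolding g1_def g2_def Dfun_def[of p "Y \<omega>"]
          by (simp add: mult_ac)
      qed
      also have "(\<integral>\<omega>. Dfun p b a + g1 * (Y \<omega> - b) + g2 * (X \<omega> - a) \<partial>M) = Dfun p b a"
        using iX1 iY1 by (simp add: prob_space a_def b_def)
      also have "(\<integral>\<omega>. Y \<omega> powr p + (p-1) * X \<omega> powr p - p * (X \<omega> powr (p-1) * Y \<omega>) \<partial>M)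
          = B + (p-1) * A - p * C"
        using iX iY iXY by (simp add: A_def B_def C_def)
      finally have K: "Dfun p b a \<le> B + (p-1) * A - p * C" .
      have D0: "0 \<le> Dfun p b a" unfolding Dfun_def using young_D[OF p1 a0 b0] by simp
      hence "s * Dfun p b a \<le> Dfun p b a" using s1 s0 by (simp add: mult_left_le_one_le)
      with K have "s * Dfun p b a \<le> B + (p-1) * A - p * C" by linarith
      thus ?thesis unfolding Dfun_def by (simp add: algebra_simps)
    qed
  qed
  thus ?thesis by (simp add: a_def b_def A_def B_def C_def)
qed

lemma scale_opt:
  fixes p C FX FY :: real
  assumes p: "p > 1" and FX: "FX \<ge> 0" and FY: "FY \<ge> 0"
    and H: "\<And>l. l > 0 \<Longrightarrow> p * (l * C) \<le> l powr p * FY + (p-1) * FX"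
  shows "C \<le> (FX powr (1/p)) powr (p-1) * FY powr (1/p)"
proof (cases "FX > 0 \<and> FY > 0")
  case True
  define l where "l = (FX / FY) powr (1/p)"
  have l0: "l > 0" using True by (simp add: l_def)
  have lp: "l powr p = FX / FY" using True p by (simp add: l_def powr_powr)
  have "p * (l * C) \<le> FX + (p-1) * FX" using H[OF l0] lp True by simp
  hence "l * C \<le> FX" using p by (simp add: algebra_simps)
  hence "C \<le> FX / l" using l0 by (simp add: field_simps)
  also have "FX / l = (FX powr (1/p)) powr (p-1) * FY powr (1/p)"
  proof -
    have "FX / l = FX * FY powr (1/p) / FX powr (1/p)"
      using True by (simp add: l_def powr_divide)
    also have "FX / FX powr (1/p) = FX powr (1 - 1/p)"
      using True by (simp add: powr_diff)
    hence "FX * FY powr (1/p) / FX powr (1/p) = FX powr (1 - 1/p) * FY powr (1/p)"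
      by (metis times_divide_eq_left)
    also have "1 - 1/p = (1/p) * (p-1)" using p by (simp add: field_simps)
    finally show ?thesis by (simp add: powr_powr)
  qed
  finally show ?thesis .
next
  case False
  have R0: "(FX powr (1/p)) powr (p-1) * FY powr (1/p) = 0"
    using False FX FY by auto
  show ?thesis
  proof (rule ccontr)
    assume "\<not> ?thesis"
    hence C0: "C > 0" using R0 by simp
    show False
    proof (cases "FY = 0")
      case True
      define l where "l = ((p-1) * FX + 1) / (p * C)"
      have "(p-1) * FX \<ge> 0" using p FX by simp
      hence l0: "l > 0" using C0 p unfolding l_def by (intro divide_pos_pos) auto
      have "p * (l * C) = (p-1) * FX + 1" using C0 p by (simp add: l_def)
      thus False using H[OF l0] True by simp
    next
      case False
      hence FX0: "FX = 0" and FYp: "FY > 0" using \<open>\<not> (FX > 0 \<and> FY > 0)\<close> FX FY by auto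
      define l where "l = (p * C / (2 * FY)) powr (1/(p-1))"
      have l0: "l > 0" using C0 p FYp by (simp add: l_def)
      have "l powr (p-1) = p * C / (2 * FY)" using C0 p FYp by (simp add: l_def powr_powr)
      hence "l powr p = l * (p * C / (2 * FY))"
        using powr_times_self[of l "p-1"] l0 by (simp add: mult.commute)
      hence "l powr p * FY = l * p * C / 2" using FYp by simp
      moreover have "p * (l * C) \<le> l powr p * FY" using H[OF l0] FX0 by simp
      moreover have "p * (l * C) = l * p * C" by simp
      ultimately have "l * p * C \<le> l * p * C / 2" by linarith
      moreover have "l * p * C > 0" using l0 p C0 by simp
      ultimately show False by linarith
    qed
  qed
qed

lemma cov_ineq:
  fixes M :: "'a measure" and X Y :: "'a \<Rightarrow> real" and p s :: real
  assumes P: "prob_space M" and p1: "1 < p" and p2: "p \<le> 2" and s0: "0 \<le> s" and s1: "s \<le> 1"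
    and Xm: "X \<in> borel_measurable M" and Ym: "Y \<in> borel_measurable M"
    and nn: "\<And>\<omega>. \<omega> \<in> space M \<Longrightarrow> X \<omega> \<ge> 0 \<and> Y \<omega> \<ge> 0"
    and iX: "integrable M (\<lambda>\<omega>. X \<omega> powr p)" and iY: "integrable M (\<lambda>\<omega>. Y \<omega> powr p)"
  shows "(\<integral>\<omega>. X \<omega> powr (p-1) * Y \<omega> \<partial>M) - s * (\<integral>\<omega>. X \<omega> \<partial>M) powr (p-1) * (\<integral>\<omega>. Y \<omega> \<partial>M)
     \<le> (((\<integral>\<omega>. X \<omega> powr p \<partial>M) - s * (\<integral>\<omega>. X \<omega> \<partial>M) powr p) powr (1/p)) powr (p-1)
        * ((\<integral>\<omega>. Y \<omega> powr p \<partial>M) - s * (\<integral>\<omega>. Y \<omega> \<partial>M) powr p) powr (1/p)"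
proof -
  interpret prob_space M by (rule P)
  have nnX: "\<And>\<omega>. \<omega> \<in> space M \<Longrightarrow> X \<omega> \<ge> 0" and nnY: "\<And>\<omega>. \<omega> \<in> space M \<Longrightarrow> Y \<omega> \<ge> 0"
    using nn by auto
  have iY1: "integrable M Y" by (rule int_of_powr[OF P _ Ym nnY iY]) (use p1 in auto)
  have iXY: "integrable M (\<lambda>\<omega>. X \<omega> powr (p-1) * Y \<omega>)" by (rule int_mixed[OF p1 Xm Ym nn iX iY])
  have JX: "(\<integral>\<omega>. X \<omega> \<partial>M) powr p \<le> (\<integral>\<omega>. X \<omega> powr p \<partial>M)" by (rule jensen_p[OF P p1 Xm nnX iX])
  have JY: "(\<integral>\<omega>. Y \<omega> \<partial>M) powr p \<le> (\<integral>\<omega>. Y \<omega> powr p \<partial>M)" by (rule jensen_p[OF P p1 Ym nnY iY])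
  define a where "a = (\<integral>\<omega>. X \<omega> \<partial>M)"
  define b where "b = (\<integral>\<omega>. Y \<omega> \<partial>M)"
  define A where "A = (\<integral>\<omega>. X \<omega> powr p \<partial>M)"
  define B where "B = (\<integral>\<omega>. Y \<omega> powr p \<partial>M)"
  define C where "C = (\<integral>\<omega>. X \<omega> powr (p-1) * Y \<omega> \<partial>M)"
  have a0: "a \<ge> 0" unfolding a_def using nnX by simp
  have b0: "b \<ge> 0" unfolding b_def using nnY by simp
  have JX': "s * a powr p \<le> A" using JX s0 s1 unfolding a_def[symmetric] A_def[symmetric]
    by (smt (verit) mult_left_le_one_le powr_ge_zero)
  have JY': "s * b powr p \<le> B" using JY s0 s1 unfolding b_def[symmetric] B_def[symmetric]
    by (smt (verit) mult_left_le_one_le powr_ge_zero)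
  have "C - s * a powr (p-1) * b \<le> ((A - s * a powr p) powr (1/p)) powr (p-1) * (B - s * b powr p) powr (1/p)"
  proof (rule scale_opt[OF p1])
    show "A - s * a powr p \<ge> 0" "B - s * b powr p \<ge> 0" using JX' JY' by auto
    fix l :: real assume l: "l > 0"
    define Y' where "Y' \<omega> = l * Y \<omega>" for \<omega>
    have Y'm: "Y' \<in> borel_measurable M" unfolding Y'_def using Ym by measurable
    have nn': "\<And>\<omega>. \<omega> \<in> space M \<Longrightarrow> X \<omega> \<ge> 0 \<and> Y' \<omega> \<ge> 0" using nn l by (auto simp: Y'_def)
    have eqp: "\<And>\<omega>. \<omega> \<in> space M \<Longrightarrow> Y' \<omega> powr p = l powr p * Y \<omega> powr p"
      using nnY l by (simp add: Y'_def powr_mult)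
    have iY': "integrable M (\<lambda>\<omega>. Y' \<omega> powr p)"
    proof -
      have "integrable M (\<lambda>\<omega>. Y' \<omega> powr p) \<longleftrightarrow> integrable M (\<lambda>\<omega>. l powr p * Y \<omega> powr p)"
        by (rule Bochner_Integration.integrable_cong) (auto simp: eqp)
      thus ?thesis using iY by simp
    qed
    have K: "p * ((\<integral>\<omega>. X \<omega> powr (p-1) * Y' \<omega> \<partial>M) - s * a powr (p-1) * (\<integral>\<omega>. Y' \<omega> \<partial>M))
     \<le> ((\<integral>\<omega>. Y' \<omega> powr p \<partial>M) - s * (\<integral>\<omega>. Y' \<omega> \<partial>M) powr p) + (p-1) * (A - s * a powr p)"
      using lemK[OF P p1 p2 s0 s1 Xm Y'm nn' iX iY'] by (simp add: a_def A_def)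
    have e1: "(\<integral>\<omega>. X \<omega> powr (p-1) * Y' \<omega> \<partial>M) = l * C"
      by (simp add: Y'_def C_def mult.left_commute)
    have e2: "(\<integral>\<omega>. Y' \<omega> \<partial>M) = l * b" by (simp add: Y'_def b_def)
    have e3: "(\<integral>\<omega>. Y' \<omega> powr p \<partial>M) = l powr p * B"
    proof -
      have "(\<integral>\<omega>. Y' \<omega> powr p \<partial>M) = (\<integral>\<omega>. l powr p * Y \<omega> powr p \<partial>M)"
        by (rule Bochner_Integration.integral_cong) (auto simp: eqp)
      thus ?thesis by (simp add: B_def)
    qed
    have e4: "(l * b) powr p = l powr p * b powr p" using l b0 by (simp add: powr_mult)
    have "p * (l * C - s * a powr (p-1) * (l * b)) \<le> (l powr p * B - s * (l powr p * b powr p)) + (p-1) * (A - s * a powr p)"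
      using K unfolding e1 e2 e3 e4 .
    thus "p * (l * (C - s * a powr (p-1) * b)) \<le> l powr p * (B - s * b powr p) + (p-1) * (A - s * a powr p)"
      by (simp add: algebra_simps)
  qed
  thus ?thesis by (simp add: a_def b_def A_def B_def C_def)
qed

lemma powr_sum_bound:
  fixes x y p :: real
  assumes x: "x \<ge> 0" and y: "y \<ge> 0" and p: "p > 0"
  shows "(x + y) powr p \<le> 2 powr p * (x powr p + y powr p)"
proof -
  have "(x + y) powr p \<le> (2 * max x y) powr p" using x y p by (intro powr_mono2) auto
  also have "\<dots> = 2 powr p * (max x y) powr p" using x y by (simp add: powr_mult)
  also have "(max x y) powr p \<le> x powr p + y powr p" by (simp add: max_def)
  hence "2 powr p * (max x y) powr p \<le> 2 powr p * (x powr p + y powr p)" by simp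
  finally show ?thesis .
qed

lemma minkowski_ineq:
  fixes M :: "'a measure" and X Y :: "'a \<Rightarrow> real" and p s :: real
  assumes P: "prob_space M" and p1: "1 < p" and p2: "p \<le> 2" and s0: "0 \<le> s" and s1: "s \<le> 1"
    and Xm: "X \<in> borel_measurable M" and Ym: "Y \<in> borel_measurable M"
    and nn: "\<And>\<omega>. \<omega> \<in> space M \<Longrightarrow> X \<omega> \<ge> 0 \<and> Y \<omega> \<ge> 0"
    and iX: "integrable M (\<lambda>\<omega>. X \<omega> powr p)" and iY: "integrable M (\<lambda>\<omega>. Y \<omega> powr p)"
  shows "((\<integral>\<omega>. (X \<omega> + Y \<omega>) powr p \<partial>M) - s * (\<integral>\<omega>. X \<omega> + Y \<omega> \<partial>M) powr p) powr (1/p)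
     \<le> ((\<integral>\<omega>. X \<omega> powr p \<partial>M) - s * (\<integral>\<omega>. X \<omega> \<partial>M) powr p) powr (1/p)
       + ((\<integral>\<omega>. Y \<omega> powr p \<partial>M) - s * (\<integral>\<omega>. Y \<omega> \<partial>M) powr p) powr (1/p)"
proof -
  interpret prob_space M by (rule P)
  define Z where "Z \<omega> = X \<omega> + Y \<omega>" for \<omega>
  have nnX: "\<And>\<omega>. \<omega> \<in> space M \<Longrightarrow> X \<omega> \<ge> 0" and nnY: "\<And>\<omega>. \<omega> \<in> space M \<Longrightarrow> Y \<omega> \<ge> 0"
    using nn by auto
  have Zm: "Z \<in> borel_measurable M" unfolding Z_def using Xm Ym by measurable
  have nnZ: "\<And>\<omega>. \<omega> \<in> space M \<Longrightarrow> Z \<omega> \<ge> 0" using nn by (auto simp: Z_def)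
  have iZ: "integrable M (\<lambda>\<omega>. Z \<omega> powr p)"
  proof (rule Bochner_Integration.integrable_bound[where f="\<lambda>\<omega>. 2 powr p * (X \<omega> powr p + Y \<omega> powr p)"])
    show "integrable M (\<lambda>\<omega>. 2 powr p * (X \<omega> powr p + Y \<omega> powr p))" using iX iY by auto
    show "(\<lambda>\<omega>. Z \<omega> powr p) \<in> borel_measurable M" using Zm by measurable
    show "AE \<omega> in M. norm (Z \<omega> powr p) \<le> norm (2 powr p * (X \<omega> powr p + Y \<omega> powr p))"
    proof (rule AE_I2)
      fix \<omega> assume w: "\<omega> \<in> space M"
      show "norm (Z \<omega> powr p) \<le> norm (2 powr p * (X \<omega> powr p + Y \<omega> powr p))"
        using powr_sum_bound[of "X \<omega>" "Y \<omega>" p] nn[OF w] p1 by (simp add: Z_def)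
    qed
  qed
  have iX1: "integrable M X" by (rule int_of_powr[OF P _ Xm nnX iX]) (use p1 in auto)
  have iY1: "integrable M Y" by (rule int_of_powr[OF P _ Ym nnY iY]) (use p1 in auto)
  have nZX: "\<And>\<omega>. \<omega> \<in> space M \<Longrightarrow> Z \<omega> \<ge> 0 \<and> X \<omega> \<ge> 0" using nnZ nnX by auto
  have nZY: "\<And>\<omega>. \<omega> \<in> space M \<Longrightarrow> Z \<omega> \<ge> 0 \<and> Y \<omega> \<ge> 0" using nnZ nnY by auto
  have iZX: "integrable M (\<lambda>\<omega>. Z \<omega> powr (p-1) * X \<omega>)" by (rule int_mixed[OF p1 Zm Xm nZX iZ iX])
  have iZY: "integrable M (\<lambda>\<omega>. Z \<omega> powr (p-1) * Y \<omega>)" by (rule int_mixed[OF p1 Zm Ym nZY iZ iY])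
  define a where "a = (\<integral>\<omega>. X \<omega> \<partial>M)"
  define b where "b = (\<integral>\<omega>. Y \<omega> \<partial>M)"
  define c where "c = (\<integral>\<omega>. Z \<omega> \<partial>M)"
  define FX where "FX = (\<integral>\<omega>. X \<omega> powr p \<partial>M) - s * a powr p"
  define FY where "FY = (\<integral>\<omega>. Y \<omega> powr p \<partial>M) - s * b powr p"
  define FZ where "FZ = (\<integral>\<omega>. Z \<omega> powr p \<partial>M) - s * c powr p"
  have cab: "c = a + b" using iX1 iY1 by (simp add: c_def a_def b_def Z_def)
  have c0: "c \<ge> 0" unfolding c_def using nnZ by simp
  have FZ0: "FZ \<ge> 0"
    using jensen_p[OF P p1 Zm nnZ iZ] s0 s1 unfolding FZ_def c_def[symmetric]
    by (smt (verit) mult_left_le_one_le powr_ge_zero)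
  have FX0: "FX \<ge> 0"
    using jensen_p[OF P p1 Xm nnX iX] s0 s1 unfolding FX_def a_def[symmetric]
    by (smt (verit) mult_left_le_one_le powr_ge_zero)
  have FY0: "FY \<ge> 0"
    using jensen_p[OF P p1 Ym nnY iY] s0 s1 unfolding FY_def b_def[symmetric]
    by (smt (verit) mult_left_le_one_le powr_ge_zero)
  define n where "n = FZ powr (1/p)"
  have n0: "n \<ge> 0" by (simp add: n_def)
  have C1: "(\<integral>\<omega>. Z \<omega> powr (p-1) * X \<omega> \<partial>M) - s * c powr (p-1) * a \<le> n powr (p-1) * FX powr (1/p)"
    using cov_ineq[OF P p1 p2 s0 s1 Zm Xm nZX iZ iX] by (simp add: n_def FZ_def FX_def a_def c_def)
  have C2: "(\<integral>\<omega>. Z \<omega> powr (p-1) * Y \<omega> \<partial>M) - s * c powr (p-1) * b \<le> n powr (p-1) * FY powr (1/p)"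
    using cov_ineq[OF P p1 p2 s0 s1 Zm Ym nZY iZ iY] by (simp add: n_def FZ_def FY_def b_def c_def)
  have sumI: "(\<integral>\<omega>. Z \<omega> powr (p-1) * X \<omega> \<partial>M) + (\<integral>\<omega>. Z \<omega> powr (p-1) * Y \<omega> \<partial>M) = (\<integral>\<omega>. Z \<omega> powr p \<partial>M)"
  proof -
    have "(\<integral>\<omega>. Z \<omega> powr (p-1) * X \<omega> \<partial>M) + (\<integral>\<omega>. Z \<omega> powr (p-1) * Y \<omega> \<partial>M)
        = (\<integral>\<omega>. Z \<omega> powr (p-1) * X \<omega> + Z \<omega> powr (p-1) * Y \<omega> \<partial>M)"
      using iZX iZY by simp
    also have "\<dots> = (\<integral>\<omega>. Z \<omega> powr p \<partial>M)"
    proof (rule Bochner_Integration.integral_cong[OF refl])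
      fix \<omega> assume w: "\<omega> \<in> space M"
      have "Z \<omega> powr (p-1) * X \<omega> + Z \<omega> powr (p-1) * Y \<omega> = Z \<omega> powr (p-1) * Z \<omega>"
        by (simp add: Z_def algebra_simps)
      also have "\<dots> = Z \<omega> powr p" using powr_times_self[OF nnZ[OF w], of "p-1"] by simp
      finally show "Z \<omega> powr (p-1) * X \<omega> + Z \<omega> powr (p-1) * Y \<omega> = Z \<omega> powr p" .
    qed
    finally show ?thesis .
  qed
  have cc: "c powr (p-1) * a + c powr (p-1) * b = c powr p"
    using powr_times_self[OF c0, of "p-1"] cab by (simp add: algebra_simps)
  have "FZ \<le> n powr (p-1) * (FX powr (1/p) + FY powr (1/p))"
  proof -
    have "FZ = ((\<integral>\<omega>. Z \<omega> powr (p-1) * X \<omega> \<partial>M) - s * c powr (p-1) * a)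
             + ((\<integral>\<omega>. Z \<omega> powr (p-1) * Y \<omega> \<partial>M) - s * c powr (p-1) * b)"
    proof -
      have e: "s * c powr p = s * c powr (p-1) * a + s * c powr (p-1) * b"
        using cc by (metis distrib_left mult.assoc)
      show ?thesis unfolding FZ_def using sumI e by linarith
    qed
    also have "\<dots> \<le> n powr (p-1) * FX powr (1/p) + n powr (p-1) * FY powr (1/p)"
      using C1 C2 by linarith
    finally show ?thesis by (simp add: algebra_simps)
  qed
  moreover have "FZ = n powr p" using FZ0 p1 by (simp add: n_def powr_powr)
  ultimately have H: "n powr (p-1) * n \<le> n powr (p-1) * (FX powr (1/p) + FY powr (1/p))"
    using powr_times_self[OF n0, of "p-1"] by simp
  have "n \<le> FX powr (1/p) + FY powr (1/p)"
  proof (cases "n = 0")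
    case True thus ?thesis by simp
  next
    case False
    hence "n powr (p-1) > 0" using n0 by simp
    thus ?thesis using H by (simp add: mult_le_cancel_left)
  qed
  thus ?thesis by (simp add: n_def FZ_def FX_def FY_def Z_def a_def b_def c_def)
qed

lemma Lnorm_p_pow:
  fixes M :: "'a measure" and W :: "'a \<Rightarrow> real" and p :: real
  assumes p: "p > 0" and nn: "\<And>\<omega>. \<omega> \<in> space M \<Longrightarrow> W \<omega> \<ge> 0"
  shows "Lnorm M p W powr p = (\<integral>\<omega>. W \<omega> powr p \<partial>M)"
proof -
  have e: "(\<integral>\<omega>. \<bar>W \<omega>\<bar> powr p \<partial>M) = (\<integral>\<omega>. W \<omega> powr p \<partial>M)"
    by (rule Bochner_Integration.integral_cong) (auto simp: nn)
  have "(\<integral>\<omega>. W \<omega> powr p \<partial>M) \<ge> 0" using nn by simp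
  thus ?thesis using p unfolding Lnorm_def e by (simp add: powr_powr)
qed

lemma Lnorm_1:
  fixes M :: "'a measure" and W :: "'a \<Rightarrow> real"
  assumes nn: "\<And>\<omega>. \<omega> \<in> space M \<Longrightarrow> W \<omega> \<ge> 0"
  shows "Lnorm M 1 W = (\<integral>\<omega>. W \<omega> \<partial>M)"
proof -
  have e: "(\<integral>\<omega>. \<bar>W \<omega>\<bar> powr 1 \<partial>M) = (\<integral>\<omega>. W \<omega> \<partial>M)"
    by (rule Bochner_Integration.integral_cong) (auto simp: nn)
  have "(\<integral>\<omega>. W \<omega> \<partial>M) \<ge> 0" using nn by simp
  thus ?thesis unfolding Lnorm_def e by simp
qed

lemma Exc_eq:
  fixes M :: "'a measure" and W :: "'a \<Rightarrow> real" and p \<theta> :: real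
  assumes p: "p > 0" and nn: "\<And>\<omega>. \<omega> \<in> space M \<Longrightarrow> W \<omega> \<ge> 0"
  shows "Exc M p \<theta> W = ((\<integral>\<omega>. W \<omega> powr p \<partial>M) - \<theta> powr p * (\<integral>\<omega>. W \<omega> \<partial>M) powr p) powr (1/p)"
  by (simp add: Exc_def Lnorm_p_pow[OF p nn] Lnorm_1[OF nn])

lemma Lnorm_finite_int:
  fixes M :: "'a measure" and W :: "'a \<Rightarrow> real" and p :: real
  assumes L: "Lnorm_finite M p W" and nn: "\<And>\<omega>. \<omega> \<in> space M \<Longrightarrow> W \<omega> \<ge> 0"
  shows "integrable M (\<lambda>\<omega>. W \<omega> powr p)" and "W \<in> borel_measurable M"
proof -
  show Wm: "W \<in> borel_measurable M" using L by (simp add: Lnorm_finite_def)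
  have "integrable M (\<lambda>\<omega>. \<bar>W \<omega>\<bar> powr p)"
    by (rule integrableI_nonneg) (use L in \<open>auto simp: Lnorm_finite_def\<close>)
  moreover have "integrable M (\<lambda>\<omega>. \<bar>W \<omega>\<bar> powr p) \<longleftrightarrow> integrable M (\<lambda>\<omega>. W \<omega> powr p)"
    by (rule Bochner_Integration.integrable_cong) (auto simp: nn)
  ultimately show "integrable M (\<lambda>\<omega>. W \<omega> powr p)" by simp
qed

lemma part_a:
  fixes M :: "'a measure" and X Y :: "'a \<Rightarrow> real" and p q \<theta> :: real
  assumes p1: "p > 1" and p2: "p \<le> 2" and th: "\<theta> \<in> {0..1}" and adm: "admissible M p q X Y"
  shows "Exc M p \<theta> (\<lambda>x. X x + Y x) \<le> Exc M p \<theta> X + Exc M p \<theta> Y \<and>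
         Cov M p \<theta> X Y \<le> Exc M p \<theta> X powr (p - 1) * Exc M p \<theta> Y"
proof -
  have P: "prob_space M" and nn: "\<And>\<omega>. \<omega> \<in> space M \<Longrightarrow> X \<omega> \<ge> 0 \<and> Y \<omega> \<ge> 0"
    and LX: "Lnorm_finite M p X" and LY: "Lnorm_finite M p Y"
    using adm by (auto simp: admissible_def)
  have nnX: "\<And>\<omega>. \<omega> \<in> space M \<Longrightarrow> X \<omega> \<ge> 0" and nnY: "\<And>\<omega>. \<omega> \<in> space M \<Longrightarrow> Y \<omega> \<ge> 0"
    and nnZ: "\<And>\<omega>. \<omega> \<in> space M \<Longrightarrow> X \<omega> + Y \<omega> \<ge> 0"
    using nn by (auto intro: add_nonneg_nonneg)
  note iX = Lnorm_finite_int[OF LX nnX] and iY = Lnorm_finite_int[OF LY nnY]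
  define s where "s = \<theta> powr p"
  have s0: "0 \<le> s" by (simp add: s_def)
  have s1: "s \<le> 1"
  proof -
    have "\<theta> powr p \<le> 1 powr p" using th p1 by (intro powr_mono2) auto
    thus ?thesis by (simp add: s_def)
  qed
  have p0: "p > 0" using p1 by simp
  have eZ: "Exc M p \<theta> (\<lambda>x. X x + Y x) = ((\<integral>\<omega>. (X \<omega> + Y \<omega>) powr p \<partial>M) - s * (\<integral>\<omega>. X \<omega> + Y \<omega> \<partial>M) powr p) powr (1/p)"
    using Exc_eq[of p M "\<lambda>x. X x + Y x" \<theta>] p0 nnZ by (simp add: s_def)
  have eX: "Exc M p \<theta> X = ((\<integral>\<omega>. X \<omega> powr p \<partial>M) - s * (\<integral>\<omega>. X \<omega> \<partial>M) powr p) powr (1/p)"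
    using Exc_eq[of p M X \<theta>] p0 nnX by (simp add: s_def)
  have eY: "Exc M p \<theta> Y = ((\<integral>\<omega>. Y \<omega> powr p \<partial>M) - s * (\<integral>\<omega>. Y \<omega> \<partial>M) powr p) powr (1/p)"
    using Exc_eq[of p M Y \<theta>] p0 nnY by (simp add: s_def)
  show ?thesis
  proof
    show "Exc M p \<theta> (\<lambda>x. X x + Y x) \<le> Exc M p \<theta> X + Exc M p \<theta> Y"
      unfolding eX eY eZ
      by (rule minkowski_ineq[OF P p1 p2 s0 s1 iX(2) iY(2) nn iX(1) iY(1)])
    show "Cov M p \<theta> X Y \<le> Exc M p \<theta> X powr (p - 1) * Exc M p \<theta> Y"
      unfolding eX eY Cov_def s_def[symmetric]
      by (rule cov_ineq[OF P p1 p2 s0 s1 iX(2) iY(2) nn iX(1) iY(1)])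
  qed
qed

lemma cov_fail_real:
  fixes p s k G \<epsilon> FY :: real
  assumes p: "p > 2" and s0: "0 < s" and s1: "s \<le> 1"
    and kdef: "k = s * (1/2) powr p" and Gdef: "G = 1/2 - k"
    and e0: "0 < \<epsilon>" and e1: "\<epsilon> \<le> 1" and ep: "\<epsilon> powr (p-2) \<le> k * p * (p-1) / 2"
    and FYdef: "FY = (1 + \<epsilon> powr p) / 2 - s * ((1 + \<epsilon>) / 2) powr p" and FY0: "FY \<ge> 0"
  shows "(G powr (1/p)) powr (p-1) * FY powr (1/p) < G - k * \<epsilon>"
proof -
  have h4: "(1/2::real) powr p \<le> 1/4"
  proof -
    have "(1/2::real) powr p \<le> (1/2) powr 2" using p by (intro powr_mono') auto
    thus ?thesis by (simp add: power2_eq_square)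
  qed
  have k0: "k > 0" using s0 by (simp add: kdef)
  have k4: "k \<le> 1/4" using h4 s1 s0 unfolding kdef
    by (smt (verit) mult_left_le_one_le powr_ge_zero)
  have G0: "G \<ge> 1/4" using k4 Gdef by simp
  have Gpos: "G > 0" using G0 by simp
  define z where "z = k * \<epsilon> / G"
  have z0: "z \<ge> 0" using k0 e0 Gpos by (simp add: z_def)
  have z1: "z \<le> 1"
  proof -
    have "k * \<epsilon> \<le> k" using e1 k0 by (simp add: mult_left_le_one_le)
    hence "k * \<epsilon> \<le> G" using k4 G0 by linarith
    thus ?thesis using Gpos by (simp add: z_def)
  qed
  have Gz: "G - k * \<epsilon> = G * (1 - z)" using Gpos by (simp add: z_def field_simps)
  have "1 + p * (-z) \<le> (1 + (-z)) powr p" by (rule bernoulli_powr) (use p z1 in auto)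
  hence bz: "1 - p * z \<le> (1 - z) powr p" by simp
  have Gp: "G powr p = G powr (p-1) * G" using powr_times_self[of G "p-1"] Gpos by simp
  have lowL: "G powr p - p * k * \<epsilon> * G powr (p-1) \<le> (G - k * \<epsilon>) powr p"
  proof -
    have "(G - k * \<epsilon>) powr p = G powr p * (1 - z) powr p"
      using Gz Gpos z1 by (simp add: powr_mult)
    also have "\<dots> \<ge> G powr p * (1 - p * z)" using bz Gpos by (intro mult_left_mono) auto
    finally have "G powr p * (1 - p * z) \<le> (G - k * \<epsilon>) powr p" .
    moreover have "G powr p * (1 - p * z) = G powr p - p * k * \<epsilon> * G powr (p-1)"
      using Gpos unfolding Gp z_def by (simp add: field_simps)
    ultimately show ?thesis by simp
  qed
  have b2: "1 + p * \<epsilon> + p * (p-1) / 2 * \<epsilon>^2 \<le> (1 + \<epsilon>) powr p"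
    by (rule bernoulli2) (use p e0 in auto)
  have eq1: "((1 + \<epsilon>) / 2) powr p = (1 + \<epsilon>) powr p * (1/2) powr p"
    using e0 by (simp add: powr_divide)
  have f1: "s * ((1 + \<epsilon>) / 2) powr p = k * (1 + \<epsilon>) powr p" unfolding eq1 kdef by simp
  have f2: "k * (1 + p * \<epsilon> + p * (p-1) / 2 * \<epsilon>^2) \<le> k * (1 + \<epsilon>) powr p"
    using b2 k0 by (intro mult_left_mono) auto
  have f3: "k * (1 + p * \<epsilon> + p * (p-1) / 2 * \<epsilon>^2) = k + k * (p * \<epsilon>) + k * (p * (p-1) / 2 * \<epsilon>^2)"
    by (simp add: distrib_left)
  have f4: "(1 + \<epsilon> powr p) / 2 = 1/2 + \<epsilon> powr p / 2" by simp
  have FYle: "FY \<le> G + \<epsilon> powr p / 2 - k * (p * \<epsilon>) - k * (p * (p-1) / 2 * \<epsilon>^2)"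
    unfolding FYdef Gdef f4 f1 using f2 f3 by linarith
  have epp: "\<epsilon> powr p = \<epsilon> powr (p-2) * \<epsilon>^2"
  proof -
    have "\<epsilon> powr (p-2) * \<epsilon> powr 2 = \<epsilon> powr p" by (simp add: powr_add[symmetric])
    moreover have "\<epsilon> powr 2 = \<epsilon>^2" using e0 powr_realpow[of \<epsilon> 2] by simp
    ultimately show ?thesis by simp
  qed
  define W where "W = k * p * (p-1) * \<epsilon>^2"
  have "\<epsilon> powr p \<le> k * p * (p-1) / 2 * \<epsilon>^2"
    unfolding epp using ep by (intro mult_right_mono) auto
  hence E1: "\<epsilon> powr p \<le> W / 2" by (simp add: W_def)
  have W0: "W > 0" using k0 p e0 by (simp add: W_def)
  have E2: "k * (p * (p-1) / 2 * \<epsilon>^2) = W / 2" by (simp add: W_def)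
  have E3: "k * (p * \<epsilon>) = k * p * \<epsilon>" by simp
  have FYlt: "FY < G - k * p * \<epsilon>" using FYle E1 W0 unfolding E2 E3 by linarith
  have "G powr (p-1) * FY < G powr (p-1) * (G - k * p * \<epsilon>)"
    using FYlt Gpos by simp
  also have "\<dots> = G powr p - p * k * \<epsilon> * G powr (p-1)" unfolding Gp by (simp add: algebra_simps)
  also have "\<dots> \<le> (G - k * \<epsilon>) powr p" by (rule lowL)
  finally have main: "G powr (p-1) * FY < (G - k * \<epsilon>) powr p" .
  have Gk0: "G - k * \<epsilon> \<ge> 0" using Gz z1 Gpos by simp
  have "(G powr (1/p)) powr (p-1) * FY powr (1/p) = (G powr (p-1) * FY) powr (1/p)"
    using Gpos FY0 p by (simp add: powr_powr powr_mult mult.commute)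
  also have "\<dots> < ((G - k * \<epsilon>) powr p) powr (1/p)"
    using main Gpos FY0 p by (intro powr_less_mono2) auto
  also have "\<dots> = G - k * \<epsilon>" using Gk0 p by (simp add: powr_powr)
  finally show ?thesis .
qed

definition M2 :: "real measure" where "M2 = measure_pmf (pmf_of_set {0, 1})"

lemma M2_prob: "prob_space M2" unfolding M2_def by (rule prob_space_measure_pmf)

lemma M2_int: "(\<integral>\<omega>. f \<omega> \<partial>M2) = (f 0 + f 1) / (2::real)"
proof -
  have "(\<integral>\<omega>. f \<omega> \<partial>M2) = (\<Sum>a\<in>{0::real,1}. f a * pmf (pmf_of_set {0,1}) a)"
    unfolding M2_def by (rule integral_measure_pmf_real) auto
  also have "\<dots> = (f 0 + f 1) / 2" by simp
  finally show ?thesis .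
qed

lemma M2_Lfin: "Lnorm_finite M2 r f"
proof -
  have fin: "finite (set_pmf (pmf_of_set {0::real, 1}))" by simp
  have "integrable M2 (\<lambda>x. \<bar>f x\<bar> powr r)" unfolding M2_def by (rule integrable_measure_pmf_finite[OF fin])
  hence "(\<integral>\<^sup>+ x. ennreal (\<bar>f x\<bar> powr r) \<partial>M2) \<noteq> \<infinity>" by (rule integrableD)
  hence "(\<integral>\<^sup>+ x. ennreal (\<bar>f x\<bar> powr r) \<partial>M2) < \<infinity>" by (simp add: less_top)
  moreover have "f \<in> borel_measurable M2" unfolding M2_def by simp
  ultimately show ?thesis unfolding Lnorm_finite_def by simp
qed

lemma M2_adm:
  assumes "\<And>\<omega>. X \<omega> \<ge> 0" "\<And>\<omega>. Y \<omega> \<ge> 0"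
  shows "admissible M2 p q X Y"
  unfolding admissible_def using assms M2_prob M2_Lfin by auto

lemma M2_space: "space M2 = UNIV" unfolding M2_def by simp

lemma part_b:
  fixes p q \<theta> :: real
  assumes p: "p > 2" and th: "\<theta> \<in> {0<..1}"
  shows "(\<exists>(M :: real measure) X Y. admissible M p q X Y \<and>
                  \<not> (Exc M p \<theta> (\<lambda>x. X x + Y x) \<le> Exc M p \<theta> X + Exc M p \<theta> Y)) \<and>
         (\<exists>(M :: real measure) X Y. admissible M p q X Y \<and>
                  \<not> (Cov M p \<theta> X Y \<le> Exc M p \<theta> X powr (p - 1) * Exc M p \<theta> Y))"
proof -
  define s where "s = \<theta> powr p"
  have s0: "s > 0" using th by (simp add: s_def)
  have s1: "s \<le> 1"
  proof -
    have "\<theta> powr p \<le> 1 powr p" using th p by (intro powr_mono2) auto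
    thus ?thesis by (simp add: s_def)
  qed
  have p0: "p > 0" and p1: "p > 1" using p by auto
  define k where "k = s * (1/2) powr p"
  define G where "G = 1/2 - k"
  define c where "c = k * p * (p-1) / 2"
  have k0: "k > 0" using s0 by (simp add: k_def)
  have c0: "c > 0" using k0 p by (simp add: c_def)
  define \<epsilon> where "\<epsilon> = min 1 (c powr (1/(p-2)))"
  have e0: "\<epsilon> > 0" using c0 by (simp add: \<epsilon>_def)
  have e1: "\<epsilon> \<le> 1" by (simp add: \<epsilon>_def)
  have ep: "\<epsilon> powr (p-2) \<le> c"
  proof -
    have "\<epsilon> powr (p-2) \<le> (c powr (1/(p-2))) powr (p-2)"
      using e0 p by (intro powr_mono2) (auto simp: \<epsilon>_def)
    also have "\<dots> = c" using c0 p by (simp add: powr_powr)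
    finally show ?thesis .
  qed
  define X where "X \<omega> = (if \<omega> = 0 then 1 else 0 :: real)" for \<omega> :: real
  define Y where "Y \<omega> = (if \<omega> = 0 then 1 else \<epsilon>)" for \<omega> :: real
  have Xn: "\<And>\<omega>. X \<omega> \<ge> 0" and Yn: "\<And>\<omega>. Y \<omega> \<ge> 0" using e0 by (auto simp: X_def Y_def)
  have admXY: "admissible M2 p q X Y" by (rule M2_adm[OF Xn Yn])
  define FY where "FY = (1 + \<epsilon> powr p) / 2 - s * ((1 + \<epsilon>) / 2) powr p"
  have hp1: "(1/2::real) powr (p-1) * (1/2) = (1/2) powr p"
    using powr_times_self[of "1/2::real" "p-1"] by simp
  have IXp: "(\<integral>\<omega>. X \<omega> powr p \<partial>M2) = 1/2" by (simp add: M2_int X_def)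
  have IX: "(\<integral>\<omega>. X \<omega> \<partial>M2) = 1/2" by (simp add: M2_int X_def)
  have IYp: "(\<integral>\<omega>. Y \<omega> powr p \<partial>M2) = (1 + \<epsilon> powr p) / 2" by (simp add: M2_int Y_def)
  have IY: "(\<integral>\<omega>. Y \<omega> \<partial>M2) = (1 + \<epsilon>) / 2" by (simp add: M2_int Y_def)
  have IXY: "(\<integral>\<omega>. X \<omega> powr (p-1) * Y \<omega> \<partial>M2) = 1/2" by (simp add: M2_int X_def Y_def)
  have FY0: "FY \<ge> 0"
  proof -
    have "(\<integral>\<omega>. Y \<omega> \<partial>M2) powr p \<le> (\<integral>\<omega>. Y \<omega> powr p \<partial>M2)"
      by (rule jensen_p[OF M2_prob p1]) (auto simp: M2_def Yn intro!: integrable_measure_pmf_finite)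
    hence "((1 + \<epsilon>) / 2) powr p \<le> (1 + \<epsilon> powr p) / 2" unfolding IY IYp .
    moreover have "s * ((1 + \<epsilon>) / 2) powr p \<le> ((1 + \<epsilon>) / 2) powr p"
      using s1 s0 by (intro mult_left_le_one_le) auto
    ultimately show ?thesis unfolding FY_def by linarith
  qed
  have ExcX: "Exc M2 p \<theta> X = G powr (1/p)"
    unfolding Exc_eq[OF p0 Xn] IXp IX G_def k_def s_def by simp
  have ExcY: "Exc M2 p \<theta> Y = FY powr (1/p)"
    unfolding Exc_eq[OF p0 Yn] IYp IY FY_def s_def by simp
  have CovXY: "Cov M2 p \<theta> X Y = G - k * \<epsilon>"
  proof -
    have "Cov M2 p \<theta> X Y = 1/2 - s * (1/2) powr (p-1) * ((1 + \<epsilon>) / 2)"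
      unfolding Cov_def IXY IX IY s_def ..
    also have "s * (1/2) powr (p-1) * ((1 + \<epsilon>) / 2) = s * ((1/2) powr (p-1) * (1/2)) * (1 + \<epsilon>)"
      by (simp add: algebra_simps)
    also have "\<dots> = k * (1 + \<epsilon>)" unfolding hp1 k_def ..
    finally show ?thesis by (simp add: G_def algebra_simps)
  qed
  have fail: "(G powr (1/p)) powr (p-1) * FY powr (1/p) < G - k * \<epsilon>"
    by (rule cov_fail_real[OF p s0 s1 k_def G_def e0 e1 _ FY_def FY0]) (use ep in \<open>simp add: c_def\<close>)
  have covfail: "\<not> (Cov M2 p \<theta> X Y \<le> Exc M2 p \<theta> X powr (p - 1) * Exc M2 p \<theta> Y)"
    unfolding CovXY ExcX ExcY using fail by simp
  have G0: "G > 0"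
  proof -
    have "(1/2::real) powr p \<le> (1/2) powr 2" using p by (intro powr_mono') auto
    hence "(1/2::real) powr p \<le> 1/4" by (simp add: power2_eq_square)
    moreover have "k \<le> (1/2) powr p" unfolding k_def using s1 s0 by (intro mult_left_le_one_le) auto
    ultimately show ?thesis unfolding G_def by linarith
  qed
  define NX where "NX = G powr (1/p)"
  define NY where "NY = FY powr (1/p)"
  have NX0: "NX > 0" using G0 by (simp add: NX_def)
  have NY0: "NY \<ge> 0" by (simp add: NY_def)
  have NXp: "NX powr p = G" using G0 p by (simp add: NX_def powr_powr)
  define g where "g t = (NX + t * NY) powr p - (1 + t) powr p / 2 + s * ((1 + t + t * \<epsilon>) / 2) powr p" for t
  have g0: "g 0 = 0" using NXp G_def k_def by (simp add: g_def)
  define D where "D = p * (NX + 0 * NY) powr (p-1) * (0 + 1 * NY) - p * (1 + 0) powr (p - 1) * (0 + 1) / 2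
      + s * (p * ((1 + 0 + 0 * \<epsilon>) / 2) powr (p - 1) * ((0 + 1 + (0 * 0 + 1 * \<epsilon>)) / 2))"
  have dg: "DERIV g 0 :> D"
    unfolding g_def D_def
    by (rule derivative_eq_intros refl | simp add: NX0)+
  have "D = p * (NX powr (p-1) * NY - (G - k * \<epsilon>))"
  proof -
    have "D = p * NX powr (p-1) * NY - p / 2 + s * (p * (1/2) powr (p - 1) * ((1 + \<epsilon>) / 2))"
      by (simp add: D_def)
    also have "s * (p * (1/2) powr (p - 1) * ((1 + \<epsilon>) / 2)) = p * (s * ((1/2) powr (p-1) * (1/2))) * (1 + \<epsilon>)"
      by (simp add: algebra_simps)
    also have "\<dots> = p * k * (1 + \<epsilon>)" unfolding hp1 k_def ..
    finally show ?thesis by (simp add: G_def algebra_simps)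
  qed
  moreover have "NX powr (p-1) * NY < G - k * \<epsilon>" using fail by (simp add: NX_def NY_def)
  ultimately have Dneg: "D < 0" using p by (simp add: mult_less_0_iff)
  obtain d where d0: "d > 0" and dH: "\<And>h. h > 0 \<Longrightarrow> h < d \<Longrightarrow> g 0 > g (0 + h)"
    using DERIV_neg_dec_right[OF dg Dneg] by blast
  define t where "t = d / 2"
  have t0: "t > 0" and gt: "g t < 0" using dH[of t] d0 g0 by (auto simp: t_def)
  define Y' where "Y' \<omega> = t * Y \<omega>" for \<omega>
  have Y'n: "\<And>\<omega>. Y' \<omega> \<ge> 0" using t0 Yn by (simp add: Y'_def)
  have admXY': "admissible M2 p q X Y'" by (rule M2_adm[OF Xn Y'n])
  have XY'n: "\<And>\<omega>. \<omega> \<in> space M2 \<Longrightarrow> X \<omega> + Y' \<omega> \<ge> 0" using Xn Y'n by (simp add: add_nonneg_nonneg)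
  define FZ where "FZ = ((1 + t) powr p + (t * \<epsilon>) powr p) / 2 - s * ((1 + t + t * \<epsilon>) / 2) powr p"
  have ExcZ: "Exc M2 p \<theta> (\<lambda>x. X x + Y' x) = FZ powr (1/p)"
    using Exc_eq[of p M2 "\<lambda>x. X x + Y' x" \<theta>] p0 XY'n
    by (simp add: FZ_def M2_int X_def Y'_def Y_def s_def add_ac)
  have ExcY': "Exc M2 p \<theta> Y' = t * NY"
  proof -
    have "Exc M2 p \<theta> Y' = ((t powr p + (t * \<epsilon>) powr p) / 2 - s * (t * (1 + \<epsilon>) / 2) powr p) powr (1/p)"
      using Exc_eq[of p M2 Y' \<theta>] p0 Y'n by (simp add: M2_int Y'_def Y_def s_def)
    also have "(t powr p + (t * \<epsilon>) powr p) / 2 - s * (t * (1 + \<epsilon>) / 2) powr p = t powr p * FY"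
    proof -
      have "(t * \<epsilon>) powr p = t powr p * \<epsilon> powr p" using t0 e0 by (simp add: powr_mult)
      moreover have "(t * (1 + \<epsilon>) / 2) powr p = t powr p * ((1 + \<epsilon>) / 2) powr p"
      proof -
        have "(t * ((1 + \<epsilon>) / 2)) powr p = t powr p * ((1 + \<epsilon>) / 2) powr p"
          using t0 e0 by (intro powr_mult)
        thus ?thesis by (metis times_divide_eq_right)
      qed
      ultimately show ?thesis by (simp add: FY_def algebra_simps)
    qed
    also have "(t powr p * FY) powr (1/p) = t * NY"
      using t0 FY0 p0 by (simp add: powr_mult powr_powr NY_def)
    finally show ?thesis .
  qed
  have "(NX + t * NY) powr p < (1 + t) powr p / 2 - s * ((1 + t + t * \<epsilon>) / 2) powr p"
    using gt by (simp add: g_def)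
  also have "\<dots> \<le> FZ" unfolding FZ_def by simp
  finally have lt: "(NX + t * NY) powr p < FZ" .
  have "NX + t * NY = ((NX + t * NY) powr p) powr (1/p)"
    using NX0 NY0 t0 p0 by (simp add: powr_powr)
  also have "\<dots> < FZ powr (1/p)"
    using lt p0 by (intro powr_less_mono2) auto
  finally have "Exc M2 p \<theta> X + Exc M2 p \<theta> Y' < Exc M2 p \<theta> (\<lambda>x. X x + Y' x)"
    unfolding ExcZ ExcY' ExcX NX_def .
  hence minfail: "\<not> (Exc M2 p \<theta> (\<lambda>x. X x + Y' x) \<le> Exc M2 p \<theta> X + Exc M2 p \<theta> Y')" by simp
  show ?thesis using admXY covfail admXY' minfail by blast
qed

theorem theorem1:
  fixes p q :: real
  assumes "p > 1" and "q > 1" and "1 / p + 1 / q = 1"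
  shows "(p \<le> 2 \<longrightarrow>
            (\<forall>(M :: 'a measure) \<theta> X Y. \<theta> \<in> {0..1} \<and> admissible M p q X Y \<longrightarrow>
               Exc M p \<theta> (\<lambda>x. X x + Y x) \<le> Exc M p \<theta> X + Exc M p \<theta> Y \<and>
               Cov M p \<theta> X Y \<le> Exc M p \<theta> X powr (p - 1) * Exc M p \<theta> Y))
       \<and> (p > 2 \<longrightarrow>
            (\<forall>\<theta> \<in> {0<..1}.
               (\<exists>(M :: real measure) X Y. admissible M p q X Y \<and>
                  \<not> (Exc M p \<theta> (\<lambda>x. X x + Y x) \<le> Exc M p \<theta> X + Exc M p \<theta> Y)) \<and>
               (\<exists>(M :: real measure) X Y. admissible M p q X Y \<and>
                  \<not> (Cov M p \<theta> X Y \<le> Exc M p \<theta> X powr (p - 1) * Exc M p \<theta> Y))))"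
proof (intro conjI impI)
  assume p2: "p \<le> 2"
  show "\<forall>(M :: 'a measure) \<theta> X Y. \<theta> \<in> {0..1} \<and> admissible M p q X Y \<longrightarrow>
               Exc M p \<theta> (\<lambda>x. X x + Y x) \<le> Exc M p \<theta> X + Exc M p \<theta> Y \<and>
               Cov M p \<theta> X Y \<le> Exc M p \<theta> X powr (p - 1) * Exc M p \<theta> Y"
    using part_a[OF assms(1) p2] by blast
next
  assume p3: "p > 2"
  show "\<forall>\<theta> \<in> {0<..1}.
               (\<exists>(M :: real measure) X Y. admissible M p q X Y \<and>
                  \<not> (Exc M p \<theta> (\<lambda>x. X x + Y x) \<le> Exc M p \<theta> X + Exc M p \<theta> Y)) \<and>
               (\<exists>(M :: real measure) X Y. admissible M p q X Y \<and>
                  \<not> (Cov M p \<theta> X Y \<le> Exc M p \<theta> X powr (p - 1) * Exc M p \<theta> Y))"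
    using part_b[OF p3] by blast
qed

end
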